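(* Let $\mathbf{E},\mathbf{F}$ be finite-dimensional Euclidean spaces, $\mathcal{K}\subset\mathbf{E}$ a proper cone, $\mathcal{A}:\mathbf{E}\to\mathbf{F}$ a surjective linear map, $b\in\mathbf{F}$, $c\in\mathbf{E}$, and consider the conic program (P) $\min\{\langle c,x\rangle:\mathcal{A}x=b,\ x\in\mathcal{K}\}$ with optimal value $p_\star$ and solution set $\mathcal{X}_\star$. Suppose primal and dual Slater's condition holds: there are $x_0\in\mathrm{int}(\mathcal{K})$ with $\mathcal{A}x_0=b$ and $y_0\in\mathbf{F}$ with $c-\mathcal{A}^*y_0\in\mathrm{int}(\mathcal{K}^* )$. For a perturbation $\Delta=(\Delta\mathcal{A},\Delta b,\Delta c)$ let (P') be $\min\{\langle c+\Delta c,x\rangle:(\mathcal{A}+\Delta\mathcal{A})x=b+\Delta b,\ x\in\mathcal{K}\}$ with solution set $\mathcal{X}_\star'$, and $\|\Delta\|=\|\Delta\mathcal{A}\|_{\mathrm{op}}+\|\Delta b\|_2+\|\Delta c\|_2$. Then for every sufficiently small $\varepsilon>0$ there is a constant $\bar c$ such that for all $\Delta$ with $\|\Delta\|\le\varepsilon$ and every optimal solution $x_\star'$ of (P'), $$\max\{\epsilon_{\mathrm{opt}}(x_\star'),\ \|\mathcal{A}(x_\star')-b\|_2\}\le\bar c\|\Delta\|.$$ Consequently, if there are constants $c_1,c_2,c_3\ge0$ and $p>0$ such that $\mathrm{dist}(x,\mathcal{X}_\star)^p\le c_1|\epsilon_{\mathrm{opt}}(x)|+c_2\|\mathcal{A}x-b\|_2+c_3\|x_-\|_2$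 for all $x\in\mathbf{E}$, then there are constants $c_1',c_2',c_3'\ge0$ such that for all such $\Delta$, $\mathrm{dist}(\mathcal{X}_\star,\mathcal{X}_\star')^{p}\le c_1'\|\Delta c\|_2+c_2'\|\Delta\mathcal{A}\|_{\mathrm{op}}+c_3'\|\Delta b\|_2$.
   Context: $\mathcal{K}^*$ is the dual cone of $\mathcal{K}$. $\epsilon_{\mathrm{opt}}(x)=\langle c,x\rangle-p_\star$ is suboptimality with respect to the original (unperturbed) data. $x_-=x-P_{\mathcal{K}}(x)$ with $P_{\mathcal{K}}$ the Euclidean projection onto $\mathcal{K}$. $\mathrm{dist}(x,\mathcal{X}_\star)=\inf_{z\in\mathcal{X}_\star}\|x-z\|_2$ and $\mathrm{dist}(\mathcal{X}_\star,\mathcal{X}_\star')=\inf_{x\in\mathcal{X}_\star,x'\in\mathcal{X}_\star'}\|x-x'\|_2$. $\|\cdot\|_{\mathrm{op}}$ is the operator norm of a linear map. *)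

theory Defs
  imports "HOL-Analysis.Analysis"
begin

definition proper_cone :: "'a::euclidean_space set \<Rightarrow> bool" where
  "proper_cone K \<longleftrightarrow> convex_cone K \<and> closed K \<and> interior K \<noteq> {} \<and>
     (\<forall>x. x \<in> K \<and> -x \<in> K \<longrightarrow> x = 0)"

definition dual_cone :: "'a::real_inner set \<Rightarrow> 'a set" where
  "dual_cone K = {y. \<forall>x\<in>K. 0 \<le> inner x y}"

definition feasible_set :: "('e::real_inner \<Rightarrow> 'f) \<Rightarrow> 'f \<Rightarrow> 'e set \<Rightarrow> 'e set" where
  "feasible_set A b K = {x. A x = b \<and> x \<in> K}"

definition opt_val :: "('e::real_inner \<Rightarrow> 'f) \<Rightarrow> 'f \<Rightarrow> 'e \<Rightarrow> 'e set \<Rightarrow> real" where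
  "opt_val A b c K = (INF x\<in>feasible_set A b K. inner c x)"

definition sol_set :: "('e::real_inner \<Rightarrow> 'f) \<Rightarrow> 'f \<Rightarrow> 'e \<Rightarrow> 'e set \<Rightarrow> 'e set" where
  "sol_set A b c K = {x \<in> feasible_set A b K. \<forall>z \<in> feasible_set A b K. inner c x \<le> inner c z}"

end

theory Submission imports Defs begin

lemma solve_pert:
  fixes A dA :: "'e::euclidean_space \<Rightarrow> 'f::euclidean_space" and R :: "'f \<Rightarrow> 'e"
  assumes lA: "linear A" and lR: "linear R" and AR: "\<And>z. A (R z) = z"
    and RB: "\<And>z. norm (R z) \<le> B * norm z" and B: "B > 0"
    and ldA: "linear dA" and small: "onorm dA * B \<le> 1/2"
  shows "\<exists>d. A d + dA d = y \<and> norm d \<le> 2 * B * norm y"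
proof -
  define T where "T = (\<lambda>z. z + dA (R z))"
  have blA: "bounded_linear dA" using ldA linear_conv_bounded_linear by blast
  have lT: "linear T" unfolding T_def
    using ldA lR by (intro linear_compose_add linear_id[unfolded id_def] linear_compose[of R dA, unfolded o_def]) auto
  have lowb: "norm z \<le> 2 * norm (T z)" for z
  proof -
    have "norm (dA (R z)) \<le> onorm dA * norm (R z)" using onorm[OF blA] .
    also have "\<dots> \<le> onorm dA * (B * norm z)" using RB onorm_pos_le[OF blA] by (simp add: mult_left_mono)
    also have "\<dots> = (onorm dA * B) * norm z" by simp
    also have "\<dots> \<le> 1/2 * norm z" using mult_right_mono[OF small norm_ge_zero] .
    finally have "norm (dA (R z)) \<le> 1/2 * norm z" .
    moreover have "norm z \<le> norm (T z) + norm (dA (R z))" unfolding T_def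
      by (metis add_diff_cancel_right' norm_triangle_ineq4)
    ultimately show ?thesis by linarith
  qed
  have "inj T"
  proof (rule linear_injective_0[OF lT, THEN iffD2], intro allI impI)
    fix z assume "T z = 0" then show "z = 0" using lowb[of z] by simp
  qed
  then have "surj T" using linear_inj_imp_surj lT by blast
  then obtain z where z: "T z = y" by (metis surjD)
  show ?thesis
  proof (intro exI conjI)
    show "A (R z) + dA (R z) = y" using z AR unfolding T_def by simp
    have "norm (R z) \<le> B * norm z" by (rule RB)
    also have "\<dots> \<le> B * (2 * norm y)" using lowb[of z] z B by (simp add: mult_left_mono)
    finally show "norm (R z) \<le> 2 * B * norm y" by simp
  qed
qed

lemma cone_shift:
  assumes cK: "convex K" and ball: "cball x0 r \<subseteq> K" and x: "x \<in> K"
    and t: "0 \<le> t" "t \<le> 1" and d: "norm d \<le> t * r"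
  shows "(1 - t) *\<^sub>R x + t *\<^sub>R x0 + d \<in> K"
proof (cases "t = 0")
  case True then show ?thesis using x d by simp
next
  case False
  then have tp: "t > 0" using t by simp
  have "x0 + (1/t) *\<^sub>R d \<in> cball x0 r"
    using d tp by (simp add: dist_norm pos_divide_le_eq mult.commute)
  then have "x0 + (1/t) *\<^sub>R d \<in> K" using ball by blast
  then have "(1 - t) *\<^sub>R x + t *\<^sub>R (x0 + (1/t) *\<^sub>R d) \<in> K"
    using cK x t by (intro convexD) auto
  then show ?thesis using tp by (simp add: algebra_simps)
qed

theorem theorem2:
  fixes K :: "'e::euclidean_space set"
    and A :: "'e \<Rightarrow> 'f::euclidean_space"
    and b :: 'f and c :: 'e
  assumes K: "proper_cone K"
    and A: "linear A" "surj A"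
    and primal_slater: "\<exists>x0 \<in> interior K. A x0 = b"
    and dual_slater: "\<exists>y0. c - adjoint A y0 \<in> interior (dual_cone K)"
  shows "\<exists>\<epsilon>0>0. \<forall>\<epsilon>. 0 < \<epsilon> \<and> \<epsilon> \<le> \<epsilon>0 \<longrightarrow>
    (\<exists>cbar. \<forall>dA db dc. linear dA \<and> onorm dA + norm db + norm dc \<le> \<epsilon> \<longrightarrow>
       (\<forall>x' \<in> sol_set (\<lambda>x. A x + dA x) (b + db) (c + dc) K.
          max (inner c x' - opt_val A b c K) (norm (A x' - b))
            \<le> cbar * (onorm dA + norm db + norm dc)))
    \<and> (\<forall>c1 c2 c3 p. c1 \<ge> 0 \<and> c2 \<ge> 0 \<and> c3 \<ge> 0 \<and> p > 0 \<and>
         (\<forall>x. infdist x (sol_set A b c K) powr p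
               \<le> c1 * \<bar>inner c x - opt_val A b c K\<bar> + c2 * norm (A x - b)
                 + c3 * norm (x - closest_point K x))
       \<longrightarrow> (\<exists>c1' c2' c3'. c1' \<ge> 0 \<and> c2' \<ge> 0 \<and> c3' \<ge> 0 \<and>
             (\<forall>dA db dc. linear dA \<and> onorm dA + norm db + norm dc \<le> \<epsilon> \<longrightarrow>
                setdist (sol_set A b c K) (sol_set (\<lambda>x. A x + dA x) (b + db) (c + dc) K) powr p
                  \<le> c1' * norm dc + c2' * onorm dA + c3' * norm db)))"
proof -
  obtain x0 where x0i: "x0 \<in> interior K" and Ax0: "A x0 = b" using primal_slater by blast
  obtain r where rpos: "r > 0" and ballK: "cball x0 r \<subseteq> K" using x0i mem_interior_cball by blast
  obtain y0 where y0: "c - adjoint A y0 \<in> interior (dual_cone K)" using dual_slater by blast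
  define s0 where "s0 = c - adjoint A y0"
  obtain \<rho> where rhopos: "\<rho> > 0" and ballD: "cball s0 \<rho> \<subseteq> dual_cone K"
    using y0 mem_interior_cball unfolding s0_def by blast
  have cK: "convex K" and coK: "conic K" using K unfolding proper_cone_def convex_cone_def by auto
  have sK: "\<rho> * norm x \<le> inner s0 x" if xK: "x \<in> K" for x
  proof (cases "x = 0")
    case True then show ?thesis by simp
  next
    case False
    then have nx: "norm x > 0" by simp
    define v where "v = s0 - (\<rho> / norm x) *\<^sub>R x"
    have "v \<in> cball s0 \<rho>" using nx rhopos unfolding v_def by (simp add: dist_norm)
    then have "v \<in> dual_cone K" using ballD by blast
    then have "0 \<le> inner x v" using xK unfolding dual_cone_def by blast
    also have "inner x v = inner s0 x - (\<rho> / norm x) * (norm x * norm x)"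
      unfolding v_def by (simp add: inner_diff_right inner_commute power2_norm_eq_inner power2_eq_square[symmetric])
    also have "\<dots> = inner s0 x - \<rho> * norm x" using nx by (simp add: field_simps)
    finally show ?thesis by simp
  qed
  have cdec: "inner c x = inner y0 (A x) + inner s0 x" for x
  proof -
    have "inner (adjoint A y0) x = inner y0 (A x)"
      using adjoint_works[OF A(1), of x y0] by (simp add: inner_commute)
    then show ?thesis unfolding s0_def by (simp add: inner_diff_left)
  qed
  obtain R where lR: "linear R" and AR0: "A \<circ> R = id" using linear_surjective_right_inverse A by blast
  have AR: "A (R z) = z" for z using AR0 by (metis comp_apply id_apply)
  obtain B where Bpos: "B > 0" and RB: "\<And>z. norm (R z) \<le> B * norm z"
    using linear_bounded_pos[OF lR] by blast
  have CS: "\<bar>inner u v\<bar> \<le> norm u * norm v" for u v :: 'e by (rule Cauchy_Schwarz_ineq2)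
  have CSf: "\<bar>inner u v\<bar> \<le> norm u * norm v" for u v :: 'f by (rule Cauchy_Schwarz_ineq2)
  define F where "F = feasible_set A b K"
  define p where "p = opt_val A b c K"
  have x0F: "x0 \<in> F" using Ax0 ballK rpos unfolding F_def feasible_set_def by auto
  have Flow: "inner y0 b + \<rho> * norm x \<le> inner c x" if "x \<in> F" for x
    using that sK[of x] cdec[of x] unfolding F_def feasible_set_def by auto
  have bddF: "bdd_below ((\<lambda>x. inner c x) ` F)"
    using Flow rhopos by (intro bdd_belowI2[of _ "inner y0 b"]) (smt (verit) norm_ge_zero mult_nonneg_nonneg)
  have pF: "p \<le> inner c x" if "x \<in> F" for x
    unfolding p_def opt_val_def F_def[symmetric] using bddF that by (rule cINF_lower)
  have pG: "q \<le> p" if "\<And>x. x \<in> F \<Longrightarrow> q \<le> inner c x" for q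
    unfolding p_def opt_val_def F_def[symmetric] using x0F that by (intro cINF_greatest) auto
  define Q where "Q = (norm c + 1) * (norm x0 + r) + norm y0 * (norm b + 1)"
  define M where "M = 2 * Q / \<rho>"
  define M2 where "M2 = (norm c * M + \<bar>inner y0 b\<bar>) / \<rho>"
  define L where "L = 1 + M2 + norm x0"
  define \<epsilon>0 where "\<epsilon>0 = min 1 (min (1/(2*B)) (min (r/(2*B*(1+norm x0)))
     (min (\<rho>/(2*(norm y0+1))) (min (r/(B*(1+M))) (r/(2*B*L))))))"
  define Clow where "Clow = norm c*(norm x0+M)*B*(1+M)/r + norm c*B*(1+M)"
  define Cup where "Cup = 2*B*L*norm c*(norm x0+M2)/r + 2*B*L*norm c + (M2 + norm x0 + r) + M"
  define C where "C = max (1+M) (max Clow Cup)"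
  have Qnn: "Q \<ge> 0" unfolding Q_def using rpos by (intro add_nonneg_nonneg mult_nonneg_nonneg) auto
  have Mnn: "M \<ge> 0" unfolding M_def using Qnn rhopos by simp
  have M2nn: "M2 \<ge> 0" unfolding M2_def using Mnn rhopos by simp
  have Lpos: "L \<ge> 1" unfolding L_def using M2nn by simp
  have e0pos: "\<epsilon>0 > 0" unfolding \<epsilon>0_def using Bpos rpos rhopos Mnn Lpos
    by (simp add: add_pos_nonneg add_nonneg_pos)
  have Cnn: "C \<ge> 0" unfolding C_def using Mnn by simp
  have core: "\<bar>inner c x' - p\<bar> \<le> C * (onorm dA + norm db + norm dc) \<and>
              norm (A x' - b) \<le> C * (onorm dA + norm db + norm dc)"
    if ldA: "linear dA" and dsmall: "onorm dA + norm db + norm dc \<le> \<epsilon>0"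
      and x'S: "x' \<in> sol_set (\<lambda>x. A x + dA x) (b + db) (c + dc) K" for dA db dc x'
  proof -
    define a where "a = onorm dA"
    define \<beta> where "\<beta> = norm db"
    define \<gamma> where "\<gamma> = norm dc"
    define \<delta> where "\<delta> = a + \<beta> + \<gamma>"
    have blA: "bounded_linear dA" using ldA linear_conv_bounded_linear by blast
    have ann: "a \<ge> 0" unfolding a_def using onorm_pos_le[OF blA] .
    have dAb: "norm (dA x) \<le> a * norm x" for x unfolding a_def using onorm[OF blA] .
    have bnn: "\<beta> \<ge> 0" "\<gamma> \<ge> 0" unfolding \<beta>_def \<gamma>_def by auto
    have de: "\<delta> \<le> \<epsilon>0" using dsmall unfolding \<delta>_def a_def \<beta>_def \<gamma>_def .
    have dnn: "\<delta> \<ge> 0" unfolding \<delta>_def using ann bnn by simp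
    have e01: "\<epsilon>0 \<le> 1" and e02: "\<epsilon>0 \<le> 1/(2*B)" and e03: "\<epsilon>0 \<le> r/(2*B*(1+norm x0))"
      and e04: "\<epsilon>0 \<le> \<rho>/(2*(norm y0+1))" and e05: "\<epsilon>0 \<le> r/(B*(1+M))" and e06: "\<epsilon>0 \<le> r/(2*B*L)"
      unfolding \<epsilon>0_def by auto
    have aB: "onorm dA * B \<le> 1/2"
    proof -
      have "a * B \<le> (1/(2*B)) * B" using de e02 ann bnn Bpos unfolding \<delta>_def
        by (intro mult_right_mono) auto
      then show ?thesis using Bpos unfolding a_def by simp
    qed
    note solve = solve_pert[OF A(1) lR AR RB Bpos ldA aB]
    have x'K: "x' \<in> K" and x'eq: "A x' + dA x' = b + db"
      and x'opt: "\<And>z. z \<in> K \<Longrightarrow> A z + dA z = b + db \<Longrightarrow> inner (c + dc) x' \<le> inner (c + dc) z"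
      using x'S unfolding sol_set_def feasible_set_def by auto
    \<comment> \<open>feasible point of the perturbed problem near x0\<close>
    obtain d0 where d0: "A d0 + dA d0 = db - dA x0" and nd0: "norm d0 \<le> 2 * B * norm (db - dA x0)"
      using solve by blast
    have ny: "norm (db - dA x0) \<le> \<delta> * (1 + norm x0)"
    proof -
      have "norm (db - dA x0) \<le> \<beta> + a * norm x0" unfolding \<beta>_def
        using norm_triangle_ineq4[of db "dA x0"] dAb[of x0] by linarith
      also have "\<dots> \<le> \<delta> + \<delta> * norm x0" unfolding \<delta>_def using ann bnn
        by (intro add_mono mult_right_mono) auto
      finally show ?thesis by (simp add: algebra_simps)
    qed
    have nd0r: "norm d0 \<le> r"
    proof -
      have "norm d0 \<le> 2 * B * (\<delta> * (1 + norm x0))" using nd0 ny Bpos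
        by (smt (verit) mult_left_mono)
      also have "\<dots> \<le> 2 * B * (\<epsilon>0 * (1 + norm x0))" using de Bpos
        by (intro mult_left_mono mult_right_mono) auto
      also have "\<dots> \<le> 2 * B * ((r/(2*B*(1+norm x0))) * (1 + norm x0))" using e03 Bpos
        by (intro mult_left_mono mult_right_mono) auto
      also have "\<dots> = r"
      proof -
        have "1 + norm x0 \<noteq> 0" by (smt (verit) norm_ge_zero)
        moreover have "\<And>m. m \<noteq> 0 \<Longrightarrow> 2 * B * (r / (2 * B * m) * m) = r" using Bpos by (simp add: field_simps)
        ultimately show ?thesis by blast
      qed
      finally show ?thesis .
    qed
    have x0'K: "x0 + d0 \<in> K" using nd0r ballK by (auto simp: dist_norm)
    have x0'eq: "A (x0 + d0) + dA (x0 + d0) = b + db"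
      using d0 Ax0 linear_add[OF A(1)] linear_add[OF ldA] by (simp add: algebra_simps)
    have opt0: "inner (c + dc) x' \<le> inner (c + dc) (x0 + d0)" using x'opt x0'K x0'eq by blast
    have nx0': "norm (x0 + d0) \<le> norm x0 + r" using nd0r norm_triangle_ineq[of x0 d0] by linarith
    have g1: "\<gamma> \<le> 1" "\<beta> \<le> 1" using de e01 ann bnn unfolding \<delta>_def by auto
    have up0: "inner (c + dc) (x0 + d0) \<le> (norm c + 1) * (norm x0 + r)"
    proof -
      have "inner (c + dc) (x0 + d0) \<le> norm (c + dc) * norm (x0 + d0)"
        using CS[of "c + dc" "x0 + d0"] by linarith
      also have "\<dots> \<le> (norm c + 1) * (norm x0 + r)"
        using nx0' g1 norm_triangle_ineq[of c dc] unfolding \<gamma>_def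
        by (intro mult_mono) auto
      finally show ?thesis .
    qed
    define X where "X = norm x'"
    have lowc: "inner c x' \<ge> inner y0 b - norm y0 * \<beta> - norm y0 * (a * X) + \<rho> * X"
    proof -
      have "A x' = b + db - dA x'" using x'eq by (simp add: algebra_simps)
      then have "inner c x' = inner y0 (b + db - dA x') + inner s0 x'"
        using cdec[of x'] by simp
      also have "\<dots> = inner y0 b + inner y0 db - inner y0 (dA x') + inner s0 x'"
        by (simp add: inner_add_right inner_diff_right)
      finally have e: "inner c x' = inner y0 b + inner y0 db - inner y0 (dA x') + inner s0 x'" .
      have "inner y0 db \<ge> - (norm y0 * \<beta>)" using CSf[of y0 db] unfolding \<beta>_def by linarith
      moreover have "inner y0 (dA x') \<le> norm y0 * (a * X)"
        using CSf[of y0 "dA x'"] dAb[of x'] unfolding X_def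
        by (smt (verit) mult_left_mono norm_ge_zero)
      moreover have "inner s0 x' \<ge> \<rho> * X" using sK[OF x'K] unfolding X_def .
      ultimately show ?thesis using e by linarith
    qed
    have lowdc: "inner dc x' \<ge> - (\<gamma> * X)" using CS[of dc x'] unfolding \<gamma>_def X_def by linarith
    have Xnn: "X \<ge> 0" unfolding X_def by simp
    have coef: "norm y0 * a + \<gamma> \<le> \<rho> / 2"
    proof -
      have "norm y0 * a + \<gamma> \<le> (norm y0 + 1) * \<delta>" unfolding \<delta>_def using ann bnn
        by (simp add: algebra_simps)
      also have "\<dots> \<le> (norm y0 + 1) * (\<rho>/(2*(norm y0+1)))" using de e04
        by (intro mult_left_mono) auto
      also have "\<dots> = \<rho> / 2"
      proof -
        have "norm y0 + 1 \<noteq> 0" by (smt (verit) norm_ge_zero)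
        moreover have "\<And>m. m \<noteq> 0 \<Longrightarrow> m * (\<rho> / (2 * m)) = \<rho> / 2" by simp
        ultimately show ?thesis by blast
      qed
      finally show ?thesis .
    qed
    have XM: "X \<le> M"
    proof -
      have "(norm y0 * a + \<gamma>) * X \<le> (\<rho>/2) * X" using coef Xnn by (rule mult_right_mono)
      moreover have "inner (c + dc) x' = inner c x' + inner dc x'" by (simp add: inner_add_left)
      moreover have "- inner y0 b + norm y0 * \<beta> \<le> norm y0 * (norm b + 1)"
        using CSf[of y0 b] mult_left_mono[OF g1(2) norm_ge_zero[of y0]] by (simp add: algebra_simps)
      ultimately have "(\<rho>/2) * X \<le> Q" using opt0 up0 lowc lowdc unfolding Q_def
        by (simp add: algebra_simps)
      then show ?thesis unfolding M_def using rhopos by (simp add: field_simps)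
    qed
    have res: "norm (A x' - b) \<le> (1 + M) * \<delta>"
    proof -
      have "A x' - b = db - dA x'" using x'eq by (simp add: algebra_simps)
      then have "norm (A x' - b) \<le> \<beta> + a * X" unfolding \<beta>_def X_def
        using norm_triangle_ineq4[of db "dA x'"] dAb[of x'] by simp
      also have "\<dots> \<le> \<delta> + \<delta> * M" unfolding \<delta>_def using ann bnn XM Xnn Mnn
        by (intro add_mono mult_mono) auto
      finally show ?thesis by (simp add: algebra_simps)
    qed
    have plow: "p - inner c x' \<le> Clow * \<delta>"
    proof -
      define e where "e = A x' - b"
      define t where "t = B * norm e / r"
      have ne: "norm e \<le> (1 + M) * \<delta>" using res unfolding e_def .
      have tnn: "t \<ge> 0" unfolding t_def using Bpos rpos by simp
      have Bne: "B * norm e \<le> B * (1 + M) * \<delta>" using ne Bpos by (simp add: mult_left_mono mult.assoc)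
      have tle: "t \<le> B * (1 + M) * \<delta> / r" unfolding t_def using Bne rpos by (simp add: divide_right_mono)
      have t1: "t \<le> 1"
      proof -
        have "B * (1 + M) * \<delta> \<le> B * (1 + M) * \<epsilon>0" using de Bpos Mnn by (intro mult_left_mono) auto
        also have "\<dots> \<le> B * (1 + M) * (r/(B*(1+M)))" using e05 Bpos Mnn by (intro mult_left_mono) auto
        also have "\<dots> = r" using Bpos Mnn by simp
        finally have "B * norm e \<le> r" using Bne by linarith
        then show ?thesis unfolding t_def using rpos by simp
      qed
      define d where "d = (- (1 - t)) *\<^sub>R R e"
      have nd: "norm d \<le> t * r"
      proof -
        have "norm d = (1 - t) * norm (R e)" unfolding d_def using t1 by simp
        also have "\<dots> \<le> 1 * norm (R e)" using tnn by (intro mult_right_mono) auto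
        also have "\<dots> \<le> B * norm e" using RB by simp
        also have "\<dots> = t * r" unfolding t_def using rpos by simp
        finally show ?thesis .
      qed
      define z where "z = (1 - t) *\<^sub>R x' + t *\<^sub>R x0 + d"
      have zK: "z \<in> K" unfolding z_def using cone_shift[OF cK ballK x'K tnn t1 nd] .
      have Ad: "A d = (- (1 - t)) *\<^sub>R A (R e)" unfolding d_def by (rule linear_cmul[OF A(1)])
      have "A z = (1 - t) *\<^sub>R A x' + t *\<^sub>R A x0 + A d"
        unfolding z_def by (simp only: linear_add[OF A(1)] linear_cmul[OF A(1)])
      also have "\<dots> = (1 - t) *\<^sub>R A x' + t *\<^sub>R A x0 - (1 - t) *\<^sub>R A (R e)"
        unfolding Ad by (simp add: scaleR_diff_left)
      also have "\<dots> = b" unfolding AR Ax0 e_def by (simp add: algebra_simps)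
      finally have "z \<in> F" using zK unfolding F_def feasible_set_def by simp
      then have pz: "p \<le> inner c z" by (rule pF)
      have iz: "inner c z = inner c x' + t * (inner c x0 - inner c x') + inner c d"
        unfolding z_def by (simp add: inner_add_right algebra_simps)
      have cd: "inner c d \<le> norm c * (B * norm e)"
        using CS[of c d] nd mult_left_mono[OF nd norm_ge_zero[of c]] unfolding t_def using rpos by simp
      have cdiff: "inner c x0 - inner c x' \<le> norm c * (norm x0 + M)"
      proof -
        have "inner c x0 \<le> norm c * norm x0" using CS[of c x0] by linarith
        moreover have "- inner c x' \<le> norm c * X" using CS[of c x'] unfolding X_def by linarith
        moreover have "norm c * X \<le> norm c * M" using XM by (simp add: mult_left_mono)
        ultimately show ?thesis by (simp add: algebra_simps)
      qed
      have cnn: "norm c * (norm x0 + M) \<ge> 0" using Mnn by simp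
      have "t * (inner c x0 - inner c x') \<le> t * (norm c * (norm x0 + M))"
        using cdiff tnn by (rule mult_left_mono)
      also have "\<dots> \<le> (B * (1 + M) * \<delta> / r) * (norm c * (norm x0 + M))"
        using tle cnn by (rule mult_right_mono)
      also have "\<dots> = \<delta> * (norm c*(norm x0+M)*B*(1+M)/r)" by simp
      finally have t1b: "t * (inner c x0 - inner c x') \<le> \<delta> * (norm c*(norm x0+M)*B*(1+M)/r)" .
      have t2b: "norm c * (B * norm e) \<le> \<delta> * (norm c*B*(1+M))"
        using mult_left_mono[OF Bne norm_ge_zero[of c]] by (simp add: algebra_simps)
      show ?thesis using pz iz cd t1b t2b unfolding Clow_def by (simp add: algebra_simps)
    qed
    have pup: "inner c x' - p \<le> Cup * \<delta>"
    proof -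
      have Cupnn: "Cup \<ge> 0" unfolding Cup_def using Bpos Lpos M2nn Mnn rpos
        by (intro add_nonneg_nonneg mult_nonneg_nonneg divide_nonneg_pos) auto
      have "inner c x' - Cup * \<delta> \<le> inner c x" if xF: "x \<in> F" for x
      proof (cases "norm x > M2")
        case True
        have "inner c x' \<le> norm c * X" using CS[of c x'] unfolding X_def by linarith
        also have "\<dots> \<le> norm c * M" using XM by (simp add: mult_left_mono)
        also have "\<dots> \<le> inner y0 b + \<rho> * M2" unfolding M2_def using rhopos by simp
        also have "\<dots> \<le> inner y0 b + \<rho> * norm x" using True rhopos by simp
        also have "\<dots> \<le> inner c x" using Flow[OF xF] .
        finally show ?thesis using Cupnn dnn by (smt (verit) mult_nonneg_nonneg)
      next
        case False
        then have nxM: "norm x \<le> M2" by simp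
        have xK: "x \<in> K" and Ax: "A x = b" using xF unfolding F_def feasible_set_def by auto
        define t where "t = 2 * B * L * \<delta> / r"
        have tnn: "t \<ge> 0" unfolding t_def using Bpos rpos Lpos dnn by simp
        have tr: "t * r = 2 * B * L * \<delta>" unfolding t_def using rpos by simp
        have t1: "t \<le> 1"
        proof -
          have "2 * B * L * \<delta> \<le> 2 * B * L * \<epsilon>0" using de Bpos Lpos by (intro mult_left_mono) auto
          also have "\<dots> \<le> 2 * B * L * (r/(2*B*L))" using e06 Bpos Lpos by (intro mult_left_mono) auto
          also have "\<dots> = r" using Bpos Lpos by simp
          finally show ?thesis using tr rpos by (simp add: t_def)
        qed
        define w where "w = (1 - t) *\<^sub>R x + t *\<^sub>R x0"
        have Aw: "A w = b" unfolding w_def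
          by (simp only: linear_add[OF A(1)] linear_cmul[OF A(1)] Ax Ax0) (simp add: algebra_simps)
        have nw: "norm w \<le> M2 + norm x0"
        proof -
          have "norm w \<le> (1 - t) * norm x + t * norm x0" unfolding w_def
            using norm_triangle_ineq[of "(1 - t) *\<^sub>R x" "t *\<^sub>R x0"] t1 tnn by simp
          also have "\<dots> \<le> 1 * M2 + 1 * norm x0" using t1 tnn nxM
            by (intro add_mono mult_mono) auto
          finally show ?thesis by simp
        qed
        obtain d where d: "A d + dA d = db - dA w" and nd: "norm d \<le> 2 * B * norm (db - dA w)"
          using solve by blast
        have ny: "norm (db - dA w) \<le> \<delta> * L"
        proof -
          have "norm (db - dA w) \<le> \<beta> + a * norm w" unfolding \<beta>_def
            using norm_triangle_ineq4[of db "dA w"] dAb[of w] by simp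
          also have "\<dots> \<le> \<delta> + \<delta> * (M2 + norm x0)" unfolding \<delta>_def using ann bnn nw
            by (intro add_mono mult_mono) auto
          finally show ?thesis unfolding L_def by (simp add: algebra_simps)
        qed
        have nd2: "norm d \<le> t * r"
        proof -
          have "norm d \<le> 2 * B * (\<delta> * L)" using nd ny Bpos by (smt (verit) mult_left_mono)
          then show ?thesis using tr by (simp add: algebra_simps)
        qed
        define z where "z = w + d"
        have zK: "z \<in> K" unfolding z_def w_def using cone_shift[OF cK ballK xK tnn t1 nd2] .
        have zeq: "A z + dA z = b + db" unfolding z_def
          using d Aw linear_add[OF A(1)] linear_add[OF ldA] by (simp add: algebra_simps)
        have opt: "inner (c + dc) x' \<le> inner (c + dc) z" using x'opt zK zeq by blast
        have ndr: "norm d \<le> r" using nd2 mult_right_mono[OF t1 less_imp_le[OF rpos]] by simp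
        have nz: "norm z \<le> M2 + norm x0 + r" unfolding z_def
          using norm_triangle_ineq[of w d] nw ndr by linarith
        have i1: "inner c x' \<le> inner c z + \<gamma> * norm z + \<gamma> * X"
        proof -
          have "inner dc z \<le> \<gamma> * norm z" using CS[of dc z] unfolding \<gamma>_def by linarith
          then show ?thesis using opt lowdc by (simp add: inner_add_left)
        qed
        have i2: "\<gamma> * norm z \<le> \<delta> * (M2 + norm x0 + r)" using nz bnn ann unfolding \<delta>_def
          using M2nn rpos by (intro mult_mono) auto
        have i3: "\<gamma> * X \<le> \<delta> * M" using XM bnn ann Xnn unfolding \<delta>_def by (intro mult_mono) auto
        have iz: "inner c z = inner c x + t * (inner c x0 - inner c x) + inner c d"
          unfolding z_def w_def by (simp add: inner_add_right algebra_simps)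
        have cd: "inner c d \<le> norm c * (2 * B * L * \<delta>)"
          using CS[of c d] mult_left_mono[OF nd2 norm_ge_zero[of c]] tr by simp
        have cdiff: "inner c x0 - inner c x \<le> norm c * (norm x0 + M2)"
        proof -
          have "inner c x0 \<le> norm c * norm x0" using CS[of c x0] by linarith
          moreover have "- inner c x \<le> norm c * norm x" using CS[of c x] by linarith
          moreover have "norm c * norm x \<le> norm c * M2" using nxM by (simp add: mult_left_mono)
          ultimately show ?thesis by (simp add: algebra_simps)
        qed
        have "t * (inner c x0 - inner c x) \<le> t * (norm c * (norm x0 + M2))"
          using cdiff tnn by (rule mult_left_mono)
        also have "\<dots> = \<delta> * (2*B*L*norm c*(norm x0+M2)/r)" unfolding t_def by simp
        finally have t1b: "t * (inner c x0 - inner c x) \<le> \<delta> * (2*B*L*norm c*(norm x0+M2)/r)" .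
        have Ce: "Cup * \<delta> = \<delta> * (2*B*L*norm c*(norm x0+M2)/r) + norm c * (2 * B * L * \<delta>) + \<delta> * (M2 + norm x0 + r) + \<delta> * M"
          unfolding Cup_def by (simp add: algebra_simps)
        show ?thesis using i1 i2 i3 iz cd t1b Ce by linarith
      qed
      then have "inner c x' - Cup * \<delta> \<le> p" by (rule pG)
      then show ?thesis by simp
    qed
    have "\<bar>inner c x' - p\<bar> \<le> C * \<delta>"
    proof -
      have "Clow * \<delta> \<le> C * \<delta>" "Cup * \<delta> \<le> C * \<delta>" unfolding C_def using dnn
        by (auto intro: mult_right_mono)
      then show ?thesis using plow pup by linarith
    qed
    moreover have "norm (A x' - b) \<le> C * \<delta>" using res unfolding C_def using dnn
      by (smt (verit) max.cobounded1 mult_right_mono)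
    ultimately show ?thesis unfolding \<delta>_def a_def \<beta>_def \<gamma>_def by simp
  qed
  have part1: "\<forall>dA db dc. linear dA \<and> onorm dA + norm db + norm dc \<le> \<epsilon> \<longrightarrow>
       (\<forall>x' \<in> sol_set (\<lambda>x. A x + dA x) (b + db) (c + dc) K.
          max (inner c x' - opt_val A b c K) (norm (A x' - b))
            \<le> C * (onorm dA + norm db + norm dc))" if "\<epsilon> \<le> \<epsilon>0" for \<epsilon>
  proof (intro allI impI ballI)
    fix dA :: "'e \<Rightarrow> 'f" and db :: 'f and dc :: 'e and x' assume h: "linear dA \<and> onorm dA + norm db + norm dc \<le> \<epsilon>"
      and x'S: "x' \<in> sol_set (\<lambda>x. A x + dA x) (b + db) (c + dc) K"
    have "\<bar>inner c x' - p\<bar> \<le> C * (onorm dA + norm db + norm dc) \<and>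
              norm (A x' - b) \<le> C * (onorm dA + norm db + norm dc)"
      using h that x'S by (intro core) auto
    then show "max (inner c x' - opt_val A b c K) (norm (A x' - b))
            \<le> C * (onorm dA + norm db + norm dc)" unfolding p_def by auto
  qed
  have part2: "\<forall>c1 c2 c3 q. c1 \<ge> 0 \<and> c2 \<ge> 0 \<and> c3 \<ge> 0 \<and> q > 0 \<and>
         (\<forall>x. infdist x (sol_set A b c K) powr q
               \<le> c1 * \<bar>inner c x - opt_val A b c K\<bar> + c2 * norm (A x - b)
                 + c3 * norm (x - closest_point K x))
       \<longrightarrow> (\<exists>c1' c2' c3'. c1' \<ge> 0 \<and> c2' \<ge> 0 \<and> c3' \<ge> 0 \<and>
             (\<forall>dA db dc. linear dA \<and> onorm dA + norm db + norm dc \<le> \<epsilon> \<longrightarrow>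
                setdist (sol_set A b c K) (sol_set (\<lambda>x. A x + dA x) (b + db) (c + dc) K) powr q
                  \<le> c1' * norm dc + c2' * onorm dA + c3' * norm db))" if "\<epsilon> \<le> \<epsilon>0" for \<epsilon>
  proof (intro allI impI)
    fix c1 c2 c3 q :: real
    assume H: "c1 \<ge> 0 \<and> c2 \<ge> 0 \<and> c3 \<ge> 0 \<and> q > 0 \<and>
         (\<forall>x. infdist x (sol_set A b c K) powr q
               \<le> c1 * \<bar>inner c x - opt_val A b c K\<bar> + c2 * norm (A x - b)
                 + c3 * norm (x - closest_point K x))"
    define k where "k = (c1 + c2) * C"
    have knn: "k \<ge> 0" unfolding k_def using H Cnn by simp
    show "\<exists>c1' c2' c3'. c1' \<ge> 0 \<and> c2' \<ge> 0 \<and> c3' \<ge> 0 \<and>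
             (\<forall>dA db dc. linear dA \<and> onorm dA + norm db + norm dc \<le> \<epsilon> \<longrightarrow>
                setdist (sol_set A b c K) (sol_set (\<lambda>x. A x + dA x) (b + db) (c + dc) K) powr q
                  \<le> c1' * norm dc + c2' * onorm dA + c3' * norm db)"
    proof (intro exI[of _ k] conjI knn allI impI)
      fix dA :: "'e \<Rightarrow> 'f" and db :: 'f and dc :: 'e assume h: "linear dA \<and> onorm dA + norm db + norm dc \<le> \<epsilon>"
      define S' where "S' = sol_set (\<lambda>x. A x + dA x) (b + db) (c + dc) K"
      define S where "S = sol_set A b c K"
      have blA: "bounded_linear dA" using h linear_conv_bounded_linear by blast
      have rhs: "0 \<le> k * norm dc + k * onorm dA + k * norm db"
        using knn onorm_pos_le[OF blA] by simp
      have main: "setdist S S' powr q \<le> k * norm dc + k * onorm dA + k * norm db"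
      proof (cases "S' = {}")
        case True then show ?thesis using rhs by simp
      next
        case False
        then obtain x' where x'S: "x' \<in> S'" by blast
        have x'K: "x' \<in> K" using x'S unfolding S'_def sol_set_def feasible_set_def by auto
        have cr: "\<bar>inner c x' - p\<bar> \<le> C * (onorm dA + norm db + norm dc) \<and>
              norm (A x' - b) \<le> C * (onorm dA + norm db + norm dc)"
          using h that x'S unfolding S'_def by (intro core) auto
        have "setdist S S' = setdist S' S" by (rule setdist_sym)
        also have "\<dots> \<le> setdist {x'} S" using x'S by (intro setdist_subset_left) auto
        also have "\<dots> = infdist x' S" by (simp add: infdist_eq_setdist)
        finally have sd: "setdist S S' \<le> infdist x' S" .
        have "setdist S S' powr q \<le> infdist x' S powr q"
          using H sd by (intro powr_mono2) auto
        also have "\<dots> \<le> c1 * \<bar>inner c x' - p\<bar> + c2 * norm (A x' - b)"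
          using H[THEN conjunct2, THEN conjunct2, THEN conjunct2, THEN conjunct2, rule_format, of x'] closest_point_self[OF x'K]
          unfolding S_def p_def by simp
        also have "\<dots> \<le> c1 * (C * (onorm dA + norm db + norm dc)) + c2 * (C * (onorm dA + norm db + norm dc))"
          using H cr by (intro add_mono mult_left_mono) auto
        also have "\<dots> = k * norm dc + k * onorm dA + k * norm db" unfolding k_def by (simp add: algebra_simps)
        finally show ?thesis .
      qed
      then show "setdist (sol_set A b c K) (sol_set (\<lambda>x. A x + dA x) (b + db) (c + dc) K) powr q \<le> k * norm dc + k * onorm dA + k * norm db"
        unfolding S'_def S_def .
    qed
  qed
  show ?thesis
    apply (rule exI[of _ \<epsilon>0])
    apply (rule conjI[OF e0pos])
    apply (intro allI impI)
    apply (rule conjI)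
     apply (rule exI[of _ C])
     apply (rule part1, simp)
    apply (rule part2, simp)
    done
qed

end
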